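(* Let $f:\mathbb{R}^n\to\mathbb{R}$ be twice continuously differentiable, $x_0\in\mathbb{R}^n$, $S_f=\{x: f(x)\le f(x_0)\}$. Assume $\|\nabla f(x)-\nabla f(y)\|\le L_C\|x-y\|$ for all $x,y\in S_f$, that there are constants $M\ge m>0$ with $M\|z\|^2\ge z^{T}\nabla^2 f(x)z\ge m\|z\|^2$ for all $x\in S_f$, $z\in\mathbb{R}^n$, and that $f$ is bounded below on $S_f$. Let $\{x_k\}$ be generated by the Eptctr algorithm described in the context and $g_k=\nabla f(x_k)$. Then $\liminf_{k\to\infty}\|g_k\| = 0$.
   Context: Eptctr algorithm (explicit pseudo-transient continuation with trust-region updating and switching preconditioning). Parameters: $\eta_a=10^{-6}$, $\eta_1=0.25$, $\gamma_1=2$, $\eta_2=0.75$, $\gamma_2=0.5$, $\theta=10^{-6}$, initial $\Delta t_0=10^{-2}$, counter $K_{bad}=0$, $y_{-1}=s_{-1}=0$. Notation: $g_k=\nabla f(x_k)$, $B_k=\nabla^2 f(x_k)$. Initially $s_0^N$ solves $B_0 s_0^N=-g_0$. At iteration $k$: if the previous trial step was accepted (or $k=0$), compute the direction $s_k^N$ as follows: if $|s_{k-1}^{T}y_{k-1}|>\theta\|s_{k-1}\|^2$ and $K_{bad}<5$, set $s_k^N=-H_kg_k$ with $H_k = I - \frac{y_{k-1}s_{k-1}^{T}+s_{k-1}y_{k-1}^{T}}{y_{k-1}^{T}s_{k-1}} + 2\frac{\|y_{k-1}\|^2}{(y_{k-1}^{T}s_{k-1})^2}s_{k-1}s_{k-1}^{T}$;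 otherwise solve $B_k s_k^N=-g_k$. If the previous trial step was rejected, the previous direction is reused. Set $s_k=\frac{\Delta t_k}{1+\Delta t_k}s_k^N$ and compute $\rho_k=\frac{f(x_k)-f(x_k+s_k)}{m_k(0)-m_k(s_k)}$ with $m_k(s)=\frac{1+0.5\Delta t_k}{1+\Delta t_k}g_k^{T}s$. If $\rho_k\le\eta_a$ the step is rejected ($x_{k+1}=x_k$, and the pair $(s,y)$ used for $H$ is not changed); otherwise it is accepted: $x_{k+1}=x_k+s_k$, $y_k=g_{k+1}-g_k$, $s_k=x_{k+1}-x_k$. Time step update: if $|1-\rho_k|\ge\eta_2$ then $K_{bad}\leftarrow K_{bad}+1$ and $\Delta t_{k+1}=\gamma_2\Delta t_k$; else if $|1-\rho_k|\ge\eta_1$ then $\Delta t_{k+1}=\Delta t_k$; else $\Delta t_{k+1}=\gamma_1\Delta t_k$. The algorithm is considered as generating an infinite sequence (the stopping test $\|g_k\|\le\epsilon$ is not triggered). *)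

theory Defs
  imports "HOL-Analysis.Analysis"
begin

definition eta_a :: real where "eta_a = 1 / 1000000"
definition eta_1 :: real where "eta_1 = 0.25"
definition gamma_1 :: real where "gamma_1 = 2"
definition eta_2 :: real where "eta_2 = 0.75"
definition gamma_2 :: real where "gamma_2 = 0.5"
definition theta :: real where "theta = 1 / 1000000"
definition dt_init :: real where "dt_init = 1 / 100"

definition outer :: "real^'n \<Rightarrow> real^'n \<Rightarrow> real^'n^'n" where
  "outer u v = (\<chi> i j. u $ i * v $ j)"

definition H_mat :: "real^'n \<Rightarrow> real^'n \<Rightarrow> real^'n^'n" where
  "H_mat s y = mat 1 - (1 / (y \<bullet> s)) *\<^sub>R (outer y s + outer s y)
      + (2 * (norm y)\<^sup>2 / (y \<bullet> s)\<^sup>2) *\<^sub>R outer s s"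

text \<open>State of the algorithm at iteration k:
  current iterate x_k, time step dt_k, counter K_bad, last accepted pair (s,y)
  used for H, previous search direction s^N, and whether the previous trial step
  was accepted (True at k = 0).\<close>
record 'n ept_state =
  xk   :: "real^'n"
  dtk  :: real
  kbad :: nat
  sp   :: "real^'n"
  yp   :: "real^'n"
  dirN :: "real^'n"
  acc  :: bool

text \<open>One iteration; g is the gradient and B the Hessian of f.\<close>
definition ept_step ::
  "(real^'n \<Rightarrow> real) \<Rightarrow> (real^'n \<Rightarrow> real^'n) \<Rightarrow> (real^'n \<Rightarrow> real^'n^'n)
    \<Rightarrow> 'n ept_state \<Rightarrow> 'n ept_state" where
  "ept_step f g B st =
    (let x = xk st; dt = dtk st; gk = g x;
         dN = (if acc st then
                 (if \<bar>sp st \<bullet> yp st\<bar> > theta * (norm (sp st))\<^sup>2 \<and> kbad st < 5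
                  then - (H_mat (sp st) (yp st) *v gk)
                  else matrix_inv (B x) *v (- gk))
               else dirN st);
         s = (dt / (1 + dt)) *\<^sub>R dN;
         pred = - ((1 + 0.5 * dt) / (1 + dt) * (gk \<bullet> s));
         rho = (f x - f (x + s)) / pred;
         accepted = (rho > eta_a);
         x' = (if accepted then x + s else x);
         s' = (if accepted then x' - x else sp st);
         y' = (if accepted then g x' - gk else yp st);
         kb' = (if \<bar>1 - rho\<bar> \<ge> eta_2 then kbad st + 1 else kbad st);
         dt' = (if \<bar>1 - rho\<bar> \<ge> eta_2 then gamma_2 * dt
                else if \<bar>1 - rho\<bar> \<ge> eta_1 then dt else gamma_1 * dt)
     in \<lparr>xk = x', dtk = dt', kbad = kb', sp = s', yp = y', dirN = dN, acc = accepted\<rparr>)"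

text \<open>Initial state: K_bad = 0, y_{-1} = s_{-1} = 0, dt_0 = 10^-2; the flag acc = True
  forces computation of a direction at k = 0 (which is the Newton direction since
  s_{-1} = 0).\<close>
definition ept_init :: "real^'n \<Rightarrow> 'n ept_state" where
  "ept_init x0 = \<lparr>xk = x0, dtk = dt_init, kbad = 0, sp = 0, yp = 0, dirN = 0, acc = True\<rparr>"

definition eptctr_iter ::
  "(real^'n \<Rightarrow> real) \<Rightarrow> (real^'n \<Rightarrow> real^'n) \<Rightarrow> (real^'n \<Rightarrow> real^'n^'n)
    \<Rightarrow> real^'n \<Rightarrow> nat \<Rightarrow> real^'n" where
  "eptctr_iter f g B x0 k = xk ((ept_step f g B ^^ k) (ept_init x0))"

end

theory Submission
  imports Defs
begin



lemma outer_mult: "outer u v *v w = (v \<bullet> w) *\<^sub>R (u::real^'n)"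
  by (simp add: vec_eq_iff outer_def matrix_vector_mult_def inner_vec_def
      sum_distrib_left mult.assoc mult.commute mult.left_commute)

lemma H_mult: "H_mat s y *v g = g - (1 / (y \<bullet> s)) *\<^sub>R ((s \<bullet> g) *\<^sub>R y + (y \<bullet> g) *\<^sub>R s)
      + (2 * (norm y)\<^sup>2 / (y \<bullet> s)\<^sup>2) *\<^sub>R ((s \<bullet> g) *\<^sub>R s)"
  unfolding H_mat_def
  by (simp add: matrix_vector_mult_add_rdistrib matrix_vector_mult_diff_rdistrib
      scaleR_matrix_vector_assoc[symmetric] outer_mult)

lemma inv_mult:
  fixes A :: "real^'n^'n"
  assumes "\<And>z. A *v z = 0 \<Longrightarrow> z = 0"
  shows "A *v (matrix_inv A *v v) = v"
proof -
  have "invertible A" using assms matrix_left_invertible_ker invertible_left_inverse by blast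
  then have "A ** matrix_inv A = mat 1 \<and> matrix_inv A ** A = mat 1"
    unfolding invertible_def matrix_inv_def by (rule someI_ex)
  then show ?thesis by (simp add: matrix_vector_mul_assoc)
qed




lemma H_good:
  fixes s y g :: "real^'n"
  assumes th: "th > 0" and c1: "\<bar>s \<bullet> y\<bar> > th * (norm s)\<^sup>2" and c2: "norm y \<le> L * norm s"
  shows "g \<bullet> (H_mat s y *v g) \<ge> (norm g)\<^sup>2 / 2"
    and "norm (H_mat s y *v g) \<le> (1 + 2 * L / th + 2 * (L / th)\<^sup>2) * norm g"
proof -
  define q where "q = y \<bullet> s"
  have "th * (norm s)\<^sup>2 \<ge> 0" using th by simp
  then have q0: "q \<noteq> 0" using c1 by (auto simp: q_def inner_commute)
  define p where "p = (s \<bullet> g) / q"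
  have e: "g \<bullet> (H_mat s y *v g) = (norm g)\<^sup>2 - 2 * p * (y \<bullet> g) + 2 * (norm y)\<^sup>2 * p\<^sup>2"
    unfolding H_mult q_def[symmetric] p_def
    by (simp add: inner_diff_right inner_add_right inner_commute norm_eq_sqrt_inner
        field_simps power2_eq_square)
  have "\<bar>p * (y \<bullet> g)\<bar> \<le> \<bar>p\<bar> * (norm y * norm g)"
    by (simp add: abs_mult Cauchy_Schwarz_ineq2 mult_left_mono)
  then have h1: "p * (y \<bullet> g) \<le> norm g * (\<bar>p\<bar> * norm y)" by (simp add: algebra_simps)
  have h2: "(norm y)\<^sup>2 * p\<^sup>2 = (\<bar>p\<bar> * norm y)\<^sup>2" by (simp add: power_mult_distrib)
  have h3: "(norm g)\<^sup>2 / 2 \<le> (norm g)\<^sup>2 - 2 * (norm g * v) + 2 * v\<^sup>2" for v :: real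
    using sum_power2_ge_zero[of "norm g / 2 - v" 0]
    by (simp add: power2_eq_square algebra_simps)
  show "g \<bullet> (H_mat s y *v g) \<ge> (norm g)\<^sup>2 / 2" unfolding e
    using h1 h2 h3[of "\<bar>p\<bar> * norm y"] by (simp add: mult.assoc)
next
  define q where "q = y \<bullet> s"
  have "th * (norm s)\<^sup>2 \<ge> 0" using th by simp
  then have q0: "q \<noteq> 0" using c1 by (auto simp: q_def inner_commute)
  have sne: "s \<noteq> 0" using q0 by (auto simp: q_def)
  have qb: "\<bar>q\<bar> > th * (norm s)\<^sup>2" using c1 by (simp add: q_def inner_commute)
  define r where "r = norm y * norm s / \<bar>q\<bar>"
  have "norm y * norm s \<le> L * (norm s)\<^sup>2" using mult_right_mono[OF c2, of "norm s"] by (simp add: power2_eq_square mult.assoc)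
  also have "\<dots> \<le> (L / th) * \<bar>q\<bar>"
  proof -
    have L0: "L \<ge> 0" using c2 sne by (smt (verit) norm_ge_zero zero_less_norm_iff mult_neg_pos)
    have "L * (th * (norm s)\<^sup>2) \<le> L * \<bar>q\<bar>" using qb L0 by (simp add: mult_left_mono)
    then show ?thesis using th by (simp add: field_simps)
  qed
  finally have rb: "r \<le> L / th" using q0 by (simp add: r_def field_simps)
  have r0: "r \<ge> 0" by (simp add: r_def)
  have "norm (H_mat s y *v g) \<le> norm g + \<bar>1 / q\<bar> * (\<bar>s \<bullet> g\<bar> * norm y + \<bar>y \<bullet> g\<bar> * norm s)
      + (2 * (norm y)\<^sup>2 / q\<^sup>2) * (\<bar>s \<bullet> g\<bar> * norm s)"
  proof -
    have a: "norm ((s \<bullet> g) *\<^sub>R y + (y \<bullet> g) *\<^sub>R s) \<le> \<bar>s \<bullet> g\<bar> * norm y + \<bar>y \<bullet> g\<bar> * norm s"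
      by (rule order.trans[OF norm_triangle_ineq]) simp
    have b: "norm ((1 / q) *\<^sub>R ((s \<bullet> g) *\<^sub>R y + (y \<bullet> g) *\<^sub>R s)) \<le> \<bar>1 / q\<bar> * (\<bar>s \<bullet> g\<bar> * norm y + \<bar>y \<bullet> g\<bar> * norm s)"
      using a by (simp only: norm_scaleR) (rule mult_left_mono, auto)
    have c: "norm ((2 * (norm y)\<^sup>2 / q\<^sup>2) *\<^sub>R ((s \<bullet> g) *\<^sub>R s)) = (2 * (norm y)\<^sup>2 / q\<^sup>2) * (\<bar>s \<bullet> g\<bar> * norm s)"
      by (simp add: abs_mult)
    show ?thesis unfolding H_mult q_def[symmetric]
      using norm_triangle_ineq[of "g - (1 / q) *\<^sub>R ((s \<bullet> g) *\<^sub>R y + (y \<bullet> g) *\<^sub>R s)" "(2 * (norm y)\<^sup>2 / q\<^sup>2) *\<^sub>R ((s \<bullet> g) *\<^sub>R s)"]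
        norm_triangle_ineq4[of g "(1 / q) *\<^sub>R ((s \<bullet> g) *\<^sub>R y + (y \<bullet> g) *\<^sub>R s)"] b c
      by linarith
  qed
  also have "\<dots> \<le> norm g + \<bar>1 / q\<bar> * (norm s * norm g * norm y + norm y * norm g * norm s)
      + (2 * (norm y)\<^sup>2 / q\<^sup>2) * (norm s * norm g * norm s)"
    by (intro add_mono mult_left_mono mult_right_mono Cauchy_Schwarz_ineq2) auto
  also have "\<dots> = (1 + 2 * r + 2 * r\<^sup>2) * norm g"
    using q0 by (simp add: r_def field_simps power2_eq_square)
  also have "\<dots> \<le> (1 + 2 * L / th + 2 * (L / th)\<^sup>2) * norm g"
    using rb r0 by (intro mult_right_mono add_mono power_mono) auto
  finally show "norm (H_mat s y *v g) \<le> (1 + 2 * L / th + 2 * (L / th)\<^sup>2) * norm g" .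
qed




locale ept_loc =
  fixes f :: "real^'n \<Rightarrow> real" and g :: "real^'n \<Rightarrow> real^'n" and B :: "real^'n \<Rightarrow> real^'n^'n"
    and x0 :: "real^'n" and L m c :: real
  assumes grad: "\<And>x. GDERIV f x :> g x"
    and hess: "\<And>x. (g has_derivative (\<lambda>h. B x *v h)) (at x)"
    and lip: "\<And>x y. f x \<le> f x0 \<Longrightarrow> f y \<le> f x0 \<Longrightarrow> norm (g x - g y) \<le> L * norm (x - y)"
    and Lpos: "L > 0" and mpos: "m > 0"
    and lower: "\<And>x z. f x \<le> f x0 \<Longrightarrow> m * (norm z)\<^sup>2 \<le> z \<bullet> (B x *v z)"
    and below: "\<And>x. f x \<le> f x0 \<Longrightarrow> c \<le> f x"
begin

lemma fder: "(f has_derivative (\<lambda>h. h \<bullet> g x)) (at x)"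
  using grad[of x] by (simp add: gderiv_def)

lemma opnorm_neg:
  assumes x: "f x \<le> f x0" and gh: "g x \<bullet> h < 0"
  shows "norm (B x *v h) \<le> L * norm h"
proof -
  have h0: "h \<noteq> 0" using gh by auto
  then have nh: "norm h > 0" by simp
  have main: "norm (B x *v h) \<le> (L + e) * norm h" if e: "e > 0" for e
  proof -
    define e1 where "e1 = - (g x \<bullet> h) / (2 * norm h)"
    have e1: "e1 > 0" using gh nh by (simp add: e1_def divide_neg_pos)
    obtain d1 where d1: "d1 > 0" "\<And>y. norm (y - x) < d1 \<Longrightarrow> norm (f y - f x - (y - x) \<bullet> g x) \<le> e1 * norm (y - x)"
      using fder[of x] e1 unfolding has_derivative_at_alt by blast
    obtain d2 where d2: "d2 > 0" "\<And>y. norm (y - x) < d2 \<Longrightarrow> norm (g y - g x - B x *v (y - x)) \<le> e * norm (y - x)"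
      using hess[of x] e unfolding has_derivative_at_alt by blast
    define t where "t = min d1 d2 / (2 * norm h)"
    have t0: "t > 0" using d1 d2 nh by (simp add: t_def)
    have nt: "norm ((x + t *\<^sub>R h) - x) = t * norm h" using t0 by simp
    have lt: "t * norm h < min d1 d2" using nh d1(1) d2(1) by (simp add: t_def min_def)
    have "\<bar>f (x + t *\<^sub>R h) - f x - t * (g x \<bullet> h)\<bar> \<le> e1 * (t * norm h)"
      using d1(2)[of "x + t *\<^sub>R h"] lt nt t0 by (simp add: inner_commute)
    moreover have "e1 * (t * norm h) = - t * (g x \<bullet> h) / 2" using nh by (simp add: e1_def)
    ultimately have "f (x + t *\<^sub>R h) - f x \<le> t * (g x \<bullet> h) / 2" by linarith
    moreover have "t * (g x \<bullet> h) < 0" using t0 gh by (simp add: mult_pos_neg)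
    ultimately have fy: "f (x + t *\<^sub>R h) \<le> f x0" using x by linarith
    have a: "norm (g (x + t *\<^sub>R h) - g x - t *\<^sub>R (B x *v h)) \<le> e * (t * norm h)"
      using d2(2)[of "x + t *\<^sub>R h"] lt nt t0 by (simp add: matrix_vector_mult_scaleR)
    have b: "norm (g (x + t *\<^sub>R h) - g x) \<le> L * (t * norm h)"
      using lip[OF fy x] t0 by simp
    have "norm (t *\<^sub>R (B x *v h)) \<le> norm (g (x + t *\<^sub>R h) - g x) + norm (g (x + t *\<^sub>R h) - g x - t *\<^sub>R (B x *v h))"
      by (metis add_diff_cancel_left' diff_add_cancel norm_triangle_ineq4 norm_minus_commute order_refl
          norm_triangle_sub)
    then have "t * norm (B x *v h) \<le> t * ((L + e) * norm h)" using a b t0 by (simp add: algebra_simps)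
    then show ?thesis using t0 by simp
  qed
  show ?thesis
  proof (rule field_le_epsilon)
    fix e :: real assume "e > 0"
    then show "norm (B x *v h) \<le> L * norm h + e"
      using main[of "e / norm h"] nh by (simp add: algebra_simps)
  qed
qed

lemma opnorm_ne:
  assumes x: "f x \<le> f x0" and gh: "g x \<bullet> h \<noteq> 0"
  shows "norm (B x *v h) \<le> L * norm h"
proof (cases "g x \<bullet> h < 0")
  case True then show ?thesis using opnorm_neg[OF x] by blast
next
  case False
  then have "g x \<bullet> (- h) < 0" using gh by simp
  from opnorm_neg[OF x this] show ?thesis
    by (metis matrix_vector_mult_scaleR norm_minus_cancel scaleR_minus1_left)
qed

lemma opnorm:
  assumes x: "f x \<le> f x0" and g0: "g x \<noteq> 0"
  shows "norm (B x *v h) \<le> L * norm h"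
proof (cases "g x \<bullet> h = 0")
  case False then show ?thesis using opnorm_ne[OF x] by blast
next
  case True
  have ng: "norm (g x) > 0" using g0 by simp
  show ?thesis
  proof (rule field_le_epsilon)
    fix e :: real assume e: "e > 0"
    define t where "t = e / (L * norm (g x))"
    have t0: "t > 0" using e ng Lpos by (simp add: t_def)
    have g1: "g x \<bullet> (h + t *\<^sub>R g x) \<noteq> 0" using True t0 g0 by (simp add: inner_add_right)
    have g2: "g x \<bullet> (h - t *\<^sub>R g x) \<noteq> 0" using True t0 g0 by (simp add: inner_diff_right)
    have eq: "B x *v h = (1/2) *\<^sub>R (B x *v (h + t *\<^sub>R g x) + B x *v (h - t *\<^sub>R g x))"
      by (simp add: matrix_vector_right_distrib matrix_vector_mult_diff_distrib)
    have "norm (B x *v h) \<le> (1/2) * (norm (B x *v (h + t *\<^sub>R g x)) + norm (B x *v (h - t *\<^sub>R g x)))"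
      unfolding eq by (simp add: norm_triangle_ineq)
    also have "\<dots> \<le> (1/2) * (L * norm (h + t *\<^sub>R g x) + L * norm (h - t *\<^sub>R g x))"
      using opnorm_ne[OF x g1] opnorm_ne[OF x g2] by simp
    also have "\<dots> \<le> (1/2) * (L * (norm h + t * norm (g x)) + L * (norm h + t * norm (g x)))"
      using Lpos t0 by (intro mult_left_mono add_mono) (auto intro: order.trans[OF norm_triangle_ineq] order.trans[OF norm_triangle_ineq4])
    also have "\<dots> = L * norm h + e" using Lpos ng by (simp add: t_def field_simps)
    finally show "norm (B x *v h) \<le> L * norm h + e" .
  qed
qed

end


context ept_loc begin

lemma phi_deriv: "DERIV (\<lambda>t. f (x + t *\<^sub>R s)) t :> (g (x + t *\<^sub>R s) \<bullet> s)"
proof -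
  have l: "((\<lambda>t. x + t *\<^sub>R s) has_derivative (\<lambda>u. u *\<^sub>R s)) (at t)"
    by (auto intro!: derivative_eq_intros)
  have "((\<lambda>t. f (x + t *\<^sub>R s)) has_derivative (\<lambda>u. (u *\<^sub>R s) \<bullet> g (x + t *\<^sub>R s))) (at t)"
    by (rule has_derivative_compose[OF l fder])
  moreover have "(\<lambda>u. (u *\<^sub>R s) \<bullet> g (x + t *\<^sub>R s)) = (*) (g (x + t *\<^sub>R s) \<bullet> s)"
    by (auto simp: inner_commute)
  ultimately show ?thesis by (simp add: has_field_derivative_def)
qed

lemma taylor:
  assumes x: "f x \<le> f x0" and gs: "g x \<bullet> s < 0" and small: "L * (norm s)\<^sup>2 < - (g x \<bullet> s)"
  shows "\<bar>f (x + s) - f x - g x \<bullet> s\<bar> \<le> L * (norm s)\<^sup>2"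
proof -
  define \<phi> where "\<phi> t = f (x + t *\<^sub>R s)" for t
  have D: "DERIV \<phi> t :> (g (x + t *\<^sub>R s) \<bullet> s)" for t unfolding \<phi>_def by (rule phi_deriv)
  have bnd: "\<bar>g (x + t *\<^sub>R s) \<bullet> s - g x \<bullet> s\<bar> \<le> L * (norm s)\<^sup>2"
    if "0 \<le> t" "t \<le> 1" "\<phi> t \<le> \<phi> 0" for t
  proof -
    have ft: "f (x + t *\<^sub>R s) \<le> f x0" using that x by (simp add: \<phi>_def)
    have "\<bar>g (x + t *\<^sub>R s) \<bullet> s - g x \<bullet> s\<bar> = \<bar>(g (x + t *\<^sub>R s) - g x) \<bullet> s\<bar>"
      by (simp add: inner_diff_left)
    also have "\<dots> \<le> norm (g (x + t *\<^sub>R s) - g x) * norm s" by (rule Cauchy_Schwarz_ineq2)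
    also have "\<dots> \<le> (L * (t * norm s)) * norm s"
      using lip[OF ft x] that by (intro mult_right_mono) auto
    also have "\<dots> \<le> (L * (1 * norm s)) * norm s"
      using that Lpos by (intro mult_right_mono mult_left_mono) auto
    finally show ?thesis by (simp add: power2_eq_square mult.assoc)
  qed
  have cont: "continuous_on UNIV \<phi>"
    using D by (intro continuous_at_imp_continuous_on) (auto intro: DERIV_isCont)
  have seg: "\<phi> t \<le> \<phi> 0" if t: "0 \<le> t" "t \<le> 1" for t
  proof (rule ccontr)
    assume "\<not> \<phi> t \<le> \<phi> 0"
    then have t1: "\<phi> 0 < \<phi> t" by simp
    obtain \<delta> where \<delta>: "\<delta> > 0" "\<And>h. h > 0 \<Longrightarrow> h < \<delta> \<Longrightarrow> \<phi> 0 > \<phi> (0 + h)"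
      using DERIV_neg_dec_right[OF D[of 0]] gs by auto
    have "t \<ge> \<delta>"
    proof (rule ccontr)
      assume "\<not> t \<ge> \<delta>"
      moreover have "t \<noteq> 0" using t1 by auto
      ultimately show False using \<delta>(2)[of t] t t1 by auto
    qed
    define A where "A = {\<delta>/2..1} \<inter> {u. \<phi> 0 \<le> \<phi> u}"
    have tA: "t \<in> A" using \<open>t \<ge> \<delta>\<close> t t1 \<delta> by (auto simp: A_def)
    have clA: "closed A" unfolding A_def
      by (intro closed_Int closed_atLeastAtMost closed_Collect_le cont continuous_on_const)
    have bA: "bdd_below A" unfolding A_def by (rule bdd_below_Int1) simp
    define T where "T = Inf A"
    have TA: "T \<in> A" unfolding T_def using closed_contains_Inf[OF _ bA clA] tA by blast
    have Tl: "T \<ge> \<delta>/2" "T \<le> 1" "\<phi> 0 \<le> \<phi> T" using TA by (auto simp: A_def)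
    have below_T: "\<phi> u \<le> \<phi> 0" if u: "0 \<le> u" "u < T" for u
    proof (rule ccontr)
      assume nu: "\<not> \<phi> u \<le> \<phi> 0"
      have "u \<noteq> 0" using nu by auto
      then have "u \<ge> \<delta>" using \<delta>(2)[of u] u nu by force
      then have "u \<in> A" using nu u Tl \<delta> by (auto simp: A_def)
      then have "T \<le> u" unfolding T_def by (rule cInf_lower[OF _ bA])
      then show False using u by simp
    qed
    have T0: "0 < T" using Tl \<delta> by simp
    obtain z where z: "0 < z" "z < T" "\<phi> T - \<phi> 0 = (T - 0) * (g (x + z *\<^sub>R s) \<bullet> s)"
      using MVT2[OF T0, of \<phi> "\<lambda>t. g (x + t *\<^sub>R s) \<bullet> s"] D by blast
    have "\<bar>g (x + z *\<^sub>R s) \<bullet> s - g x \<bullet> s\<bar> \<le> L * (norm s)\<^sup>2"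
      using bnd[of z] below_T[of z] z Tl by auto
    then have "g (x + z *\<^sub>R s) \<bullet> s < 0" using small by linarith
    then have "\<phi> T - \<phi> 0 < 0" using z(3) T0 by (simp add: mult_pos_neg)
    then show False using Tl by simp
  qed
  obtain z where z: "0 < z" "z < 1" "\<phi> 1 - \<phi> 0 = (1 - 0) * (g (x + z *\<^sub>R s) \<bullet> s)"
    using MVT2[of 0 1 \<phi> "\<lambda>t. g (x + t *\<^sub>R s) \<bullet> s"] D by force
  have "\<bar>g (x + z *\<^sub>R s) \<bullet> s - g x \<bullet> s\<bar> \<le> L * (norm s)\<^sup>2"
    using bnd[of z] seg[of z] z by auto
  then show ?thesis using z(3) by (simp add: \<phi>_def)
qed

end


context ept_loc begin

definition "aa = min (1/2) (m / L\<^sup>2)"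
definition "bb = max (1 + 2 * L / theta + 2 * (L / theta)\<^sup>2) (1 / m)"
definition "kap = bb\<^sup>2 / aa"
definition "del = 1 / (16 * (1 + L * kap))"
definition "good x d \<longleftrightarrow> g x \<bullet> d \<le> - aa * (norm (g x))\<^sup>2 \<and> norm d \<le> bb * norm (g x)"

lemma aa_pos: "aa > 0" using mpos Lpos by (simp add: aa_def)
lemma bb_pos: "bb > 0" using mpos by (simp add: bb_def less_max_iff_disj)
lemma kap_pos: "kap > 0" using aa_pos bb_pos by (simp add: kap_def)
lemma del_pos: "del > 0"
proof -
  have "L * kap > 0" using kap_pos Lpos by simp
  then show ?thesis by (simp add: del_def)
qed

lemma dir_H:
  assumes c1: "\<bar>s \<bullet> y\<bar> > theta * (norm s)\<^sup>2" and c2: "norm y \<le> L * norm s"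
  shows "good x (- (H_mat s y *v g x))"
proof -
  have th: "theta > 0" by (simp add: theta_def)
  note h = H_good[OF th c1 c2, of "g x"]
  have "g x \<bullet> (- (H_mat s y *v g x)) \<le> - aa * (norm (g x))\<^sup>2"
  proof -
    have "aa * (norm (g x))\<^sup>2 \<le> (1/2) * (norm (g x))\<^sup>2"
      by (intro mult_right_mono) (auto simp: aa_def min_def)
    then show ?thesis using h(1) by simp
  qed
  moreover have "norm (- (H_mat s y *v g x)) \<le> bb * norm (g x)"
  proof -
    have "(1 + 2 * L / theta + 2 * (L / theta)\<^sup>2) * norm (g x) \<le> bb * norm (g x)"
      by (intro mult_right_mono) (auto simp: bb_def)
    then show ?thesis using h(2) by simp
  qed
  ultimately show ?thesis by (simp add: good_def)
qed

lemma dir_N: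
  assumes x: "f x \<le> f x0"
  shows "good x (matrix_inv (B x) *v (- g x))"
proof -
  define d where "d = matrix_inv (B x) *v (- g x)"
  have ker: "z = 0" if "B x *v z = 0" for z
    using lower[OF x, of z] that mpos by (simp add: mult_le_0_iff)
  have Bd: "B x *v d = - g x" unfolding d_def by (rule inv_mult[OF ker])
  have q: "m * (norm d)\<^sup>2 \<le> - (g x \<bullet> d)"
    using lower[OF x, of d] Bd by (simp add: inner_commute)
  show ?thesis
  proof (cases "g x = 0")
    case True
    then have "m * (norm d)\<^sup>2 \<le> 0" using q by simp
    then have "d = 0" using mpos by (simp add: mult_le_0_iff)
    then show ?thesis using True by (simp add: good_def d_def[symmetric])
  next
    case False
    have "norm (g x) = norm (B x *v d)" using Bd by simp
    also have "\<dots> \<le> L * norm d" by (rule opnorm[OF x False])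
    finally have gd: "norm (g x) \<le> L * norm d" .
    then have "(norm (g x))\<^sup>2 \<le> L\<^sup>2 * (norm d)\<^sup>2"
      using power_mono[OF gd, of 2] by (simp add: power_mult_distrib)
    then have "m / L\<^sup>2 * (norm (g x))\<^sup>2 \<le> m * (norm d)\<^sup>2"
      using Lpos mpos by (simp add: field_simps)
    moreover have "aa * (norm (g x))\<^sup>2 \<le> m / L\<^sup>2 * (norm (g x))\<^sup>2"
      by (intro mult_right_mono) (auto simp: aa_def)
    ultimately have A: "g x \<bullet> d \<le> - aa * (norm (g x))\<^sup>2" using q by linarith
    have "m * (norm d)\<^sup>2 \<le> norm d * norm (g x)"
      using q Cauchy_Schwarz_ineq2[of "g x" d] by (simp add: abs_le_iff mult.commute)
    then have "m * norm d \<le> norm (g x)"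
      by (cases "d = 0") (auto simp: power2_eq_square)
    then have "norm d \<le> (1/m) * norm (g x)" using mpos by (simp add: field_simps)
    also have "\<dots> \<le> bb * norm (g x)" by (intro mult_right_mono) (auto simp: bb_def)
    finally show ?thesis using A by (simp add: good_def d_def[symmetric])
  qed
qed

end


context ept_loc begin

lemma rho_pred:
  assumes gd: "good x d" and dt: "dt > 0"
    and s: "s = (dt / (1 + dt)) *\<^sub>R d"
    and pred: "pred = - ((1 + 0.5 * dt) / (1 + dt) * (g x \<bullet> s))"
  shows "pred \<ge> (dt / (1 + dt)) * aa * (norm (g x))\<^sup>2 / 2"
proof -
  define \<tau> where "\<tau> = dt / (1 + dt)"
  define G where "G = - (g x \<bullet> d)"
  define c where "c = (1 + 0.5 * dt) / (1 + dt)"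
  have t0: "\<tau> > 0" using dt by (simp add: \<tau>_def)
  have c2: "c \<ge> 1/2" using dt by (simp add: c_def field_simps)
  have G: "G \<ge> aa * (norm (g x))\<^sup>2" using gd by (simp add: good_def G_def)
  have G0: "G \<ge> 0" using G aa_pos by (smt (verit) zero_le_mult_iff zero_le_power2)
  have p: "pred = c * (\<tau> * G)" using pred s by (simp add: c_def \<tau>_def G_def)
  have "c * (\<tau> * G) \<ge> (1/2) * (\<tau> * G)" using c2 t0 G0 by (intro mult_right_mono) auto
  moreover have "\<tau> * G \<ge> \<tau> * (aa * (norm (g x))\<^sup>2)" using t0 G by (intro mult_left_mono) auto
  ultimately have "pred \<ge> \<tau> * (aa * (norm (g x))\<^sup>2) / 2" using p by linarith
  then show ?thesis unfolding \<tau>_def by (simp add: mult.assoc)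
qed

lemma K16: "K > 0 \<Longrightarrow> K / (16 * (1 + K)) \<le> (1/16::real)"
  by (simp add: field_simps)

lemma K16b: "K > 0 \<Longrightarrow> 1 / (16 * (1 + K)) \<le> (1/16::real)"
  by (simp add: field_simps)

lemma rho_good:
  assumes x: "f x \<le> f x0" and gd: "good x d" and dt: "dt > 0" and dts: "dt \<le> del" and g0: "g x \<noteq> 0"
    and s: "s = (dt / (1 + dt)) *\<^sub>R d"
    and pred: "pred = - ((1 + 0.5 * dt) / (1 + dt) * (g x \<bullet> s))"
  shows "\<bar>1 - (f x - f (x + s)) / pred\<bar> < 1/4"
proof -
  define \<tau> where "\<tau> = dt / (1 + dt)"
  define G where "G = - (g x \<bullet> d)"
  define c where "c = (1 + 0.5 * dt) / (1 + dt)"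
  have t0: "\<tau> > 0" using dt by (simp add: \<tau>_def)
  have tdt: "\<tau> \<le> dt" using dt by (simp add: \<tau>_def field_simps)
  have c2: "c \<ge> 1/2" using dt by (simp add: c_def field_simps)
  have c1: "c - 1 = - \<tau> / 2" using dt by (simp add: c_def \<tau>_def field_simps)
  have ng: "norm (g x) > 0" using g0 by simp
  have G: "G \<ge> aa * (norm (g x))\<^sup>2" using gd by (simp add: good_def G_def)
  have "aa * (norm (g x))\<^sup>2 > 0" using aa_pos ng by simp
  then have Gp: "G > 0" using G by linarith
  have nd: "norm d \<le> bb * norm (g x)" using gd by (simp add: good_def)
  have "(norm d)\<^sup>2 \<le> (bb * norm (g x))\<^sup>2" using nd by (intro power_mono) auto
  also have "\<dots> = bb\<^sup>2 * (norm (g x))\<^sup>2" by (simp add: power_mult_distrib)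
  also have "\<dots> \<le> bb\<^sup>2 * (G / aa)" using G aa_pos by (intro mult_left_mono) (auto simp: field_simps)
  also have "\<dots> = kap * G" by (simp add: kap_def)
  finally have dk: "(norm d)\<^sup>2 \<le> kap * G" .
  have gs: "g x \<bullet> s = - \<tau> * G" using s by (simp add: \<tau>_def G_def)
  have ns: "(norm s)\<^sup>2 = \<tau>\<^sup>2 * (norm d)\<^sup>2" using s t0 by (simp add: \<tau>_def[symmetric] power_mult_distrib)
  have Lk: "L * kap * \<tau> \<le> 1/16"
  proof -
    have "L * kap * \<tau> \<le> L * kap * del" using tdt dts Lpos kap_pos by (intro mult_left_mono) auto
    also have "\<dots> = (L * kap) / (16 * (1 + L * kap))" by (simp add: del_def)
    also have "\<dots> \<le> 1/16" using Lpos kap_pos by (intro K16) simp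
    finally show ?thesis .
  qed
  have Ls: "L * (norm s)\<^sup>2 \<le> (L * kap * \<tau>) * (\<tau> * G)"
  proof -
    have "L * (norm s)\<^sup>2 = L * \<tau>\<^sup>2 * (norm d)\<^sup>2" using ns by simp
    also have "\<dots> \<le> L * \<tau>\<^sup>2 * (kap * G)" using dk Lpos by (intro mult_left_mono) auto
    finally show ?thesis by (simp add: power2_eq_square algebra_simps)
  qed
  have tG: "\<tau> * G > 0" using t0 Gp by simp
  have small: "L * (norm s)\<^sup>2 < - (g x \<bullet> s)"
  proof -
    have "(L * kap * \<tau>) * (\<tau> * G) \<le> (1/16) * (\<tau> * G)" using Lk tG by (intro mult_right_mono) auto
    then show ?thesis using Ls gs tG by simp
  qed
  have gsn: "g x \<bullet> s < 0" using gs tG by simp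
  define R where "R = f (x + s) - f x - g x \<bullet> s"
  have R: "\<bar>R\<bar> \<le> (L * kap * \<tau>) * (\<tau> * G)"
    using taylor[OF x gsn small] Ls by (simp add: R_def)
  have p: "pred = c * (\<tau> * G)" using pred gs by (simp add: c_def)
  have pp: "pred > 0" using p c2 tG by simp
  have "1 - (f x - f (x + s)) / pred = (pred - (\<tau> * G - R)) / pred"
    using pp gs by (simp add: R_def field_simps)
  also have "pred - (\<tau> * G - R) = (c - 1) * (\<tau> * G) + R" using p by (simp add: algebra_simps)
  also have "\<dots> = - (\<tau> / 2) * (\<tau> * G) + R" using c1 by simp
  finally have e: "1 - (f x - f (x + s)) / pred = (- (\<tau> / 2) * (\<tau> * G) + R) / pred" .
  have num: "\<bar>- (\<tau> / 2) * (\<tau> * G) + R\<bar> \<le> (\<tau> / 2 + L * kap * \<tau>) * (\<tau> * G)"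
  proof -
    have "\<bar>- (\<tau> / 2) * (\<tau> * G) + R\<bar> \<le> \<bar>- (\<tau> / 2) * (\<tau> * G)\<bar> + \<bar>R\<bar>" by (rule abs_triangle_ineq)
    moreover have "\<bar>- (\<tau> / 2) * (\<tau> * G)\<bar> = (\<tau> / 2) * (\<tau> * G)" using Gp t0 by (simp add: abs_mult)
    ultimately show ?thesis using R by (simp add: distrib_right)
  qed
  have "\<tau> / 2 + L * kap * \<tau> < 1/8"
  proof -
    have "\<tau> \<le> del" using tdt dts by simp
    also have "del \<le> 1/16" unfolding del_def using Lpos kap_pos by (intro K16b) simp
    finally show ?thesis using Lk by simp
  qed
  then have num2: "\<bar>- (\<tau> / 2) * (\<tau> * G) + R\<bar> < (1/8) * (\<tau> * G)"
    using num mult_strict_right_mono[OF _ tG, of "\<tau> / 2 + L * kap * \<tau>" "1/8"] by linarith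
  have "(1/2) * (\<tau> * G) \<le> c * (\<tau> * G)" using c2 tG by (intro mult_right_mono) auto
  then have "(1/8) * (\<tau> * G) \<le> (1/4) * pred" using p by linarith
  then have "\<bar>- (\<tau> / 2) * (\<tau> * G) + R\<bar> < (1/4) * pred" using num2 by linarith
  then show ?thesis unfolding e using pp by (simp add: abs_divide divide_less_eq)
qed

end


context ept_loc begin

definition "Inv st \<longleftrightarrow> f (xk st) \<le> f x0 \<and> dtk st > 0 \<and> norm (yp st) \<le> L * norm (sp st)
   \<and> (\<not> acc st \<longrightarrow> good (xk st) (dirN st))"

lemma step:
  assumes I: "Inv st" and st': "st' = ept_step f g B st"
  shows "Inv st'"
    and "f (xk st') \<le> f (xk st)"
    and "acc st' \<Longrightarrow> f (xk st) - f (xk st') \<ge> eta_a * ((dtk st / (1 + dtk st)) * aa * (norm (g (xk st)))\<^sup>2 / 2)"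
    and "\<not> acc st' \<Longrightarrow> xk st' = xk st \<and> dtk st' = dtk st / 2"
    and "g (xk st) \<noteq> 0 \<Longrightarrow> dtk st \<le> del \<Longrightarrow> acc st'"
    and "dtk st' \<ge> dtk st / 2"
    and "g (xk st) = 0 \<Longrightarrow> \<not> acc st'"
    and "g (xk st) \<noteq> 0 \<Longrightarrow> dtk st \<le> del \<Longrightarrow> dtk st' \<ge> dtk st"
proof -
  define x where "x = xk st"
  define dt where "dt = dtk st"
  define gk where "gk = g x"
  define dN where "dN = (if acc st then
                 (if \<bar>sp st \<bullet> yp st\<bar> > theta * (norm (sp st))\<^sup>2 \<and> kbad st < 5
                  then - (H_mat (sp st) (yp st) *v gk)
                  else matrix_inv (B x) *v (- gk))
               else dirN st)"
  define s where "s = (dt / (1 + dt)) *\<^sub>R dN"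
  define pred where "pred = - ((1 + 0.5 * dt) / (1 + dt) * (gk \<bullet> s))"
  define rho where "rho = (f x - f (x + s)) / pred"
  define accepted where "accepted = (rho > eta_a)"
  define x' where "x' = (if accepted then x + s else x)"
  define s' where "s' = (if accepted then x' - x else sp st)"
  define y' where "y' = (if accepted then g x' - gk else yp st)"
  define kb' where "kb' = (if \<bar>1 - rho\<bar> \<ge> eta_2 then kbad st + 1 else kbad st)"
  define dt' where "dt' = (if \<bar>1 - rho\<bar> \<ge> eta_2 then gamma_2 * dt
                else if \<bar>1 - rho\<bar> \<ge> eta_1 then dt else gamma_1 * dt)"
  have st'eq: "st' = \<lparr>xk = x', dtk = dt', kbad = kb', sp = s', yp = y', dirN = dN, acc = accepted\<rparr>"
    unfolding st' ept_step_def Let_def x_def dt_def gk_def dN_def s_def pred_def rho_def accepted_def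
      x'_def s'_def y'_def kb'_def dt'_def by simp
  have x: "f x \<le> f x0" and dt0: "dt > 0" and yl: "norm (yp st) \<le> L * norm (sp st)"
    and gdprev: "\<not> acc st \<Longrightarrow> good x (dirN st)"
    using I by (auto simp: Inv_def x_def dt_def)
  have gd: "good x dN"
  proof (cases "acc st")
    case True
    show ?thesis
    proof (cases "\<bar>sp st \<bullet> yp st\<bar> > theta * (norm (sp st))\<^sup>2 \<and> kbad st < 5")
      case True2: True
      then have "dN = - (H_mat (sp st) (yp st) *v gk)" unfolding dN_def using True by auto
      then show ?thesis using True2 dir_H[of "sp st" "yp st" x] yl by (simp add: gk_def)
    next
      case False
      then have "dN = matrix_inv (B x) *v (- gk)" unfolding dN_def using True by auto
      then show ?thesis using dir_N[OF x] by (simp add: gk_def)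
    qed
  next
    case False
    then show ?thesis using gdprev by (simp add: dN_def)
  qed
  have pb: "pred \<ge> (dt / (1 + dt)) * aa * (norm (g x))\<^sup>2 / 2"
    by (rule rho_pred[OF gd dt0 s_def]) (simp add: pred_def gk_def)
  have pb0: "(dt / (1 + dt)) * aa * (norm (g x))\<^sup>2 / 2 \<ge> 0" using dt0 aa_pos by simp
  have ea: "eta_a > 0" by (simp add: eta_a_def)
  have dec: "f x - f (x + s) \<ge> eta_a * ((dt / (1 + dt)) * aa * (norm (g x))\<^sup>2 / 2)" if acc: accepted
  proof -
    have r: "rho > eta_a" using acc by (simp add: accepted_def)
    have "pred \<noteq> 0" using r ea by (auto simp: rho_def)
    then have pp: "pred > 0" using pb pb0 by linarith
    have "f x - f (x + s) = rho * pred" using pp by (simp add: rho_def)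
    also have "\<dots> \<ge> eta_a * pred" using r pp by (intro mult_right_mono) auto
    finally have "f x - f (x + s) \<ge> eta_a * pred" .
    moreover have "eta_a * pred \<ge> eta_a * ((dt / (1 + dt)) * aa * (norm (g x))\<^sup>2 / 2)"
      using pb ea by (intro mult_left_mono) auto
    ultimately show ?thesis by linarith
  qed
  have fx': "f x' \<le> f x"
  proof (cases accepted)
    case True
    have "eta_a * ((dt / (1 + dt)) * aa * (norm (g x))\<^sup>2 / 2) \<ge> 0" using pb0 ea by (intro mult_nonneg_nonneg) auto
    then show ?thesis using dec[OF True] True by (simp add: x'_def)
  next
    case False then show ?thesis by (simp add: x'_def)
  qed
  have rej: "\<not> accepted \<Longrightarrow> dt' = dt / 2"
  proof -
    assume "\<not> accepted"
    then have "rho \<le> eta_a" by (simp add: accepted_def)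
    then have "\<bar>1 - rho\<bar> \<ge> eta_2" by (simp add: eta_a_def eta_2_def)
    then show "dt' = dt / 2" by (simp add: dt'_def gamma_2_def)
  qed
  have "dt' = gamma_2 * dt \<or> dt' = dt \<or> dt' = gamma_1 * dt" by (simp add: dt'_def)
  then have dt'b: "dt' \<ge> dt / 2" using dt0 unfolding gamma_2_def gamma_1_def by auto
  show "Inv st'"
  proof -
    have "f x' \<le> f x0" using fx' x by simp
    moreover have "dt' > 0" using dt'b dt0 by simp
    moreover have "norm y' \<le> L * norm s'"
    proof (cases accepted)
      case True
      then show ?thesis using lip[OF _ x, of x'] fx' x by (simp add: y'_def s'_def gk_def)
    next
      case False
      then show ?thesis using yl by (simp add: y'_def s'_def)
    qed
    moreover have "\<not> accepted \<longrightarrow> good x' dN" using gd by (simp add: x'_def)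
    ultimately show ?thesis by (simp add: Inv_def st'eq)
  qed
  show "f (xk st') \<le> f (xk st)" using fx' by (simp add: st'eq x_def)
  show "acc st' \<Longrightarrow> f (xk st) - f (xk st') \<ge> eta_a * ((dtk st / (1 + dtk st)) * aa * (norm (g (xk st)))\<^sup>2 / 2)"
    using dec by (simp add: st'eq x'_def x_def dt_def)
  show "\<not> acc st' \<Longrightarrow> xk st' = xk st \<and> dtk st' = dtk st / 2"
    using rej by (simp add: st'eq x'_def x_def dt_def)
  show "dtk st' \<ge> dtk st / 2" using dt'b by (simp add: st'eq dt_def)
  show "g (xk st) \<noteq> 0 \<Longrightarrow> dtk st \<le> del \<Longrightarrow> acc st'"
  proof -
    assume g0: "g (xk st) \<noteq> 0" and d: "dtk st \<le> del"
    have "\<bar>1 - rho\<bar> < 1/4" unfolding rho_def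
      by (rule rho_good[OF x gd dt0 _ _ s_def]) (use g0 d in \<open>auto simp: x_def dt_def pred_def gk_def\<close>)
    then have "rho > 3/4" by linarith
    then have "rho > eta_a" by (simp add: eta_a_def)
    then show "acc st'" by (simp add: st'eq accepted_def)
  qed
  show "g (xk st) \<noteq> 0 \<Longrightarrow> dtk st \<le> del \<Longrightarrow> dtk st' \<ge> dtk st"
  proof -
    assume g0: "g (xk st) \<noteq> 0" and d: "dtk st \<le> del"
    have "\<bar>1 - rho\<bar> < 1/4" unfolding rho_def
      by (rule rho_good[OF x gd dt0 _ _ s_def]) (use g0 d in \<open>auto simp: x_def dt_def pred_def gk_def\<close>)
    then have "dt' = gamma_1 * dt" by (simp add: dt'_def eta_1_def eta_2_def)
    then show "dtk st' \<ge> dtk st" using dt0 by (simp add: st'eq dt_def gamma_1_def)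
  qed
  show "g (xk st) = 0 \<Longrightarrow> \<not> acc st'"
  proof -
    assume "g (xk st) = 0"
    then have "gk = 0" by (simp add: gk_def x_def)
    then have "pred = 0" by (simp add: pred_def)
    then have "rho = 0" by (simp add: rho_def)
    then show "\<not> acc st'" by (simp add: st'eq accepted_def eta_a_def)
  qed
qed

end


context ept_loc begin

definition "stt k = (ept_step f g B ^^ k) (ept_init x0)"

lemma stt_Suc: "stt (Suc k) = ept_step f g B (stt k)"
  by (simp add: stt_def)

lemma Inv_stt: "Inv (stt k)"
proof (induction k)
  case 0
  show ?case by (simp add: stt_def ept_init_def Inv_def dt_init_def)
next
  case (Suc k)
  then show ?case using step(1)[OF Suc stt_Suc] by simp
qed

lemmas stp = step[OF Inv_stt stt_Suc]

lemma fmono: "k \<le> j \<Longrightarrow> f (xk (stt j)) \<le> f (xk (stt k))"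
proof (induction j rule: dec_induct)
  case base then show ?case by simp
next
  case (step j) then show ?case using stp(2)[of j] by simp
qed

lemma conv: "liminf (\<lambda>k. ereal (norm (g (xk (stt k))))) = 0"
proof (rule ccontr)
  define l where "l = liminf (\<lambda>k. ereal (norm (g (xk (stt k)))))"
  assume "liminf (\<lambda>k. ereal (norm (g (xk (stt k))))) \<noteq> 0"
  then have ln: "l \<noteq> 0" by (simp add: l_def)
  have "0 \<le> l" unfolding l_def by (rule Liminf_bounded) simp
  then have "0 < l" using ln by simp
  then obtain \<epsilon> where e0: "0 < ereal \<epsilon>" and el: "ereal \<epsilon> < l" using ereal_dense2 by blast
  have e: "\<epsilon> > 0" using e0 by simp
  have "eventually (\<lambda>k. ereal \<epsilon> < ereal (norm (g (xk (stt k))))) sequentially"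
    using less_LiminfD[OF el[unfolded l_def]] by simp
  then obtain K where K: "\<And>k. k \<ge> K \<Longrightarrow> \<epsilon> < norm (g (xk (stt k)))"
    unfolding eventually_sequentially by auto
  have g0: "g (xk (stt k)) \<noteq> 0" if "k \<ge> K" for k using K[OF that] e by auto
  define D where "D = min (dtk (stt K)) (del / 2)"
  have D0: "D > 0" using Inv_stt[of K] del_pos by (simp add: D_def Inv_def)
  have dtl: "dtk (stt k) \<ge> D" if "k \<ge> K" for k
    using that
  proof (induction k rule: dec_induct)
    case base then show ?case by (simp add: D_def)
  next
    case (step k)
    show ?case
    proof (cases "dtk (stt k) \<le> del")
      case True
      then show ?thesis using stp(8)[OF g0[OF step(1)] True] step(3) by simp
    next
      case False
      then show ?thesis using stp(6)[of k] by (simp add: D_def)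
    qed
  qed
  have inf_acc: "\<exists>j\<ge>k. acc (stt (Suc j))" if "k \<ge> K" for k
  proof (rule ccontr)
    assume "\<not> (\<exists>j\<ge>k. acc (stt (Suc j)))"
    then have rj: "\<And>j. j \<ge> k \<Longrightarrow> \<not> acc (stt (Suc j))" by auto
    have big: "dtk (stt j) > del" if "j \<ge> k" for j
      using rj[OF that] stp(5)[of j] g0[of j] that \<open>k \<ge> K\<close> by force
    have half: "dtk (stt (k + n)) = dtk (stt k) / 2 ^ n" for n
    proof (induction n)
      case 0 then show ?case by simp
    next
      case (Suc n)
      then show ?case using stp(4)[OF rj[of "k + n"]] by simp
    qed
    obtain n where n: "dtk (stt k) / del < 2 ^ n" using real_arch_pow[of 2 "dtk (stt k) / del"] by auto
    have "dtk (stt k) / 2 ^ n > del" using big[of "k + n"] half[of n] by simp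
    then have "dtk (stt k) > del * 2 ^ n" by (simp add: field_simps)
    moreover have "dtk (stt k) < del * 2 ^ n" using n del_pos by (simp add: field_simps)
    ultimately show False by simp
  qed
  define \<Delta> where "\<Delta> = eta_a * ((D / (1 + D)) * aa * \<epsilon>\<^sup>2 / 2)"
  have \<Delta>0: "\<Delta> > 0" using D0 aa_pos e by (simp add: \<Delta>_def eta_a_def)
  have decr: "f (xk (stt (Suc j))) \<le> f (xk (stt j)) - \<Delta>" if "j \<ge> K" "acc (stt (Suc j))" for j
  proof -
    have dj: "D \<le> dtk (stt j)" using dtl[OF that(1)] .
    have q: "D / (1 + D) \<le> dtk (stt j) / (1 + dtk (stt j))"
      using dj D0 by (simp add: field_simps)
    have ge: "\<epsilon>\<^sup>2 \<le> (norm (g (xk (stt j))))\<^sup>2" using K[OF that(1)] e by (intro power_mono) auto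
    have "(D / (1 + D)) * aa * \<epsilon>\<^sup>2 \<le> (dtk (stt j) / (1 + dtk (stt j))) * aa * (norm (g (xk (stt j))))\<^sup>2"
    proof -
      have dp: "dtk (stt j) > 0" using dj D0 by simp
      show ?thesis using q ge aa_pos D0 dp by (intro mult_mono) auto
    qed
    then have "(D / (1 + D)) * aa * \<epsilon>\<^sup>2 / 2 \<le> (dtk (stt j) / (1 + dtk (stt j))) * aa * (norm (g (xk (stt j))))\<^sup>2 / 2"
      by (rule divide_right_mono) simp_all
    then have "\<Delta> \<le> eta_a * ((dtk (stt j) / (1 + dtk (stt j))) * aa * (norm (g (xk (stt j))))\<^sup>2 / 2)"
      unfolding \<Delta>_def by (rule mult_left_mono) (auto simp: eta_a_def)
    then show ?thesis using stp(3)[OF that(2)] by simp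
  qed
  have many: "\<exists>k\<ge>K. f (xk (stt k)) \<le> f (xk (stt K)) - real N * \<Delta>" for N
  proof (induction N)
    case 0 then show ?case by auto
  next
    case (Suc N)
    then obtain k where k: "k \<ge> K" "f (xk (stt k)) \<le> f (xk (stt K)) - real N * \<Delta>" by auto
    obtain j where j: "j \<ge> k" "acc (stt (Suc j))" using inf_acc[OF k(1)] by auto
    have "f (xk (stt (Suc j))) \<le> f (xk (stt j)) - \<Delta>" using decr[of j] j k by simp
    also have "\<dots> \<le> f (xk (stt k)) - \<Delta>" using fmono[OF j(1)] by simp
    finally have "f (xk (stt (Suc j))) \<le> f (xk (stt K)) - real (Suc N) * \<Delta>" using k(2) by (simp add: algebra_simps)
    then show ?case using j k by (intro exI[of _ "Suc j"]) auto
  qed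
  obtain N where N: "(f (xk (stt K)) - c) / \<Delta> < real N" using reals_Archimedean2 by blast
  obtain k where k: "k \<ge> K" "f (xk (stt k)) \<le> f (xk (stt K)) - real N * \<Delta>" using many[of N] by auto
  have "c \<le> f (xk (stt k))" using below Inv_stt[of k] by (simp add: Inv_def)
  moreover have "f (xk (stt K)) - c < real N * \<Delta>" using N \<Delta>0 by (simp add: field_simps)
  ultimately show False using k by simp
qed

end


theorem theorem1:
  fixes f :: "real^'n \<Rightarrow> real"
    and g :: "real^'n \<Rightarrow> real^'n"
    and B :: "real^'n \<Rightarrow> real^'n^'n"
    and x0 :: "real^'n"
    and L m M :: real
  assumes grad: "\<And>x. GDERIV f x :> g x"
    and hess: "\<And>x. (g has_derivative (\<lambda>h. B x *v h)) (at x)"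
    and hess_cont: "continuous_on UNIV B"
    and lip: "\<forall>x\<in>{x. f x \<le> f x0}. \<forall>y\<in>{x. f x \<le> f x0}. norm (g x - g y) \<le> L * norm (x - y)"
    and mpos: "0 < m" and mM: "m \<le> M"
    and bounds: "\<forall>x\<in>{x. f x \<le> f x0}. \<forall>z.
                   m * (norm z)\<^sup>2 \<le> z \<bullet> (B x *v z) \<and> z \<bullet> (B x *v z) \<le> M * (norm z)\<^sup>2"
    and below: "\<exists>c. \<forall>x\<in>{x. f x \<le> f x0}. c \<le> f x"
  shows "liminf (\<lambda>k. ereal (norm (g (eptctr_iter f g B x0 k)))) = 0"
proof -
  obtain c where c: "\<forall>x\<in>{x. f x \<le> f x0}. c \<le> f x" using below by blast
  interpret E: ept_loc f g B x0 "max L 1" m c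
  proof
    show "\<And>x. GDERIV f x :> g x" by (rule grad)
    show "\<And>x. (g has_derivative (\<lambda>h. B x *v h)) (at x)" by (rule hess)
    show "norm (g x - g y) \<le> max L 1 * norm (x - y)" if "f x \<le> f x0" "f y \<le> f x0" for x y
    proof -
      have "norm (g x - g y) \<le> L * norm (x - y)" using lip that by auto
      also have "\<dots> \<le> max L 1 * norm (x - y)" by (intro mult_right_mono) auto
      finally show ?thesis .
    qed
    show "0 < max L 1" by simp
    show "0 < m" by (rule mpos)
    show "m * (norm z)\<^sup>2 \<le> z \<bullet> (B x *v z)" if "f x \<le> f x0" for x z using bounds that by auto
    show "c \<le> f x" if "f x \<le> f x0" for x using c that by auto
  qed
  have "eptctr_iter f g B x0 = (\<lambda>k. xk (E.stt k))"
    by (simp add: fun_eq_iff eptctr_iter_def E.stt_def)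
  then show ?thesis using E.conv by simp
qed

end
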